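(* In the unknown-network setting, both the random dictatorship mechanism $g^{R}$ and the duples mechanism $g^{D}$ are valid and DSIC.
   Context: Let $V=\{1,\dots,n\}$, $n\ge2$. A relationship network assigns to every unordered pair of distinct agents one of the symmetric relations friends, enemies, impartial. Preferences: fix $w_f,w_e>0$; an agent $i$ with friend set $F$ and enemy set $E$ ranks $p,p'\in[0,1]^V$ by $p\succ p'$ iff $p_i>p'_i$, or $p_i=p'_i$ and $w_f\sum_{j\in F}(p_j-p'_j)-w_e\sum_{j\in E}(p_j-p'_j)>0$; $p\succsim p'$ means not $p'\succ p$. Unknown-network setting: agent $i$'s type set $\Theta_i$ is the set of triples $m_i=(N_i,F_i,E_i)$ with $N_i\subseteq V$ and $F_i,E_i$ disjoint subsets of $V\setminus\{i\}$; set $I_i=V\setminus(\{i\}\cup F_i\cup E_i)$. A mechanism $g:\prod_i\Theta_i\to[0,1]^V$ is valid if $\sum_ig_i(\mathbf m)\le1$ always, and DSIC if for all $i$, $\mathbf m$, $m'_i$: $g(\mathbf m)\succsim_{m_i}g(m'_i,\mathbf m_{-i})$, where $\succsim_{m_i}$ is the preference of $i$ with the friend and enemy sets in $m_i$. Random dictatorship: for agent $j$ define the choice set $C_j(\mathbf m)$ as: if $F_j\ne\varnothing$, $C_j=F_j\cap N_j$ if this is nonempty, else $C_j=F_j$; if $F_j=\varnothing\ne I_j$, $C_j=I_j\cap N_j$ if nonempty, else $C_j=I_j$; if $F_j=I_j=\varnothing$, $C_j=E_j\cap N_j$ if nonempty, else $C_j=E_j$. Let $g^R_{i|j}(\mathbf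 m)=1/|C_j(\mathbf m)|$ if $i\in C_j(\mathbf m)$ and $0$ otherwise, and $g^R_i(\mathbf m)=\frac1n\sum_{j\in V\setminus\{i\}}g^R_{i|j}(\mathbf m)$. Duples: for an agent $l$ and $j\in V\setminus\{l\}$ let $\mathrm{lev}_l(j)=1,2,3,4,5,6$ according as $j\in F_l\cap N_l$, $F_l\setminus N_l$, $I_l\cap N_l$, $I_l\setminus N_l$, $E_l\cap N_l$, $E_l\setminus N_l$ (using $l$'s report). For distinct $j,k$, agent $l\notin\{j,k\}$ votes for $j$ against $k$ if $\mathrm{lev}_l(j)<\mathrm{lev}_l(k)$ (and abstains if equal). Let $x_{jk}(\mathbf m)$ be the number of agents voting for $j$ against $k$. Set $g^D_j(\{j,k\},\mathbf m)=1,\tfrac12,0$ according as $x_{jk}>x_{kj}$, $x_{jk}=x_{kj}$, $x_{jk}<x_{kj}$, and $g^D_k(\{j,k\},\mathbf m)=1-g^D_j(\{j,k\},\mathbf m)$. Then $g^D_i(\mathbf m)=\frac{2}{n(n-1)}\sum_{j\in V\setminus\{i\}}g^D_i(\{i,j\},\mathbf m)$. *)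

theory Defs
  imports Main Complex_Main
begin

text \<open>A profile assigns a report to every agent;
  only the values on V = {1..n} are ever used.  Outcomes are functions
  nat \<Rightarrow> real (only values on V are relevant).\<close>

type_synonym report = "nat set \<times> nat set \<times> nat set"
type_synonym profile = "nat \<Rightarrow> report"
type_synonym outcome = "nat \<Rightarrow> real"

definition agents :: "nat \<Rightarrow> nat set" where
  "agents n = {1..n}"

definition rN :: "report \<Rightarrow> nat set" where "rN m = fst m"
definition rF :: "report \<Rightarrow> nat set" where "rF m = fst (snd m)"
definition rE :: "report \<Rightarrow> nat set" where "rE m = snd (snd m)"

definition Theta :: "nat \<Rightarrow> nat \<Rightarrow> report set" where
  "Theta n i = {(N, F, E). N \<subseteq> agents n \<and> F \<subseteq> agents n - {i} \<and>
                           E \<subseteq> agents n - {i} \<and> F \<inter> E = {}}"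

definition rI :: "nat \<Rightarrow> nat \<Rightarrow> report \<Rightarrow> nat set" where
  "rI n i m = agents n - ({i} \<union> rF m \<union> rE m)"

definition profiles :: "nat \<Rightarrow> profile set" where
  "profiles n = {m. \<forall>i\<in>agents n. m i \<in> Theta n i}"

definition strict_pref :: "real \<Rightarrow> real \<Rightarrow> nat \<Rightarrow> nat set \<Rightarrow> nat set \<Rightarrow>
    outcome \<Rightarrow> outcome \<Rightarrow> bool" where
  "strict_pref w_f w_e i F E p p' \<longleftrightarrow>
     p i > p' i \<or>
     (p i = p' i \<and> w_f * (\<Sum>j\<in>F. p j - p' j) - w_e * (\<Sum>j\<in>E. p j - p' j) > 0)"

definition weak_pref :: "real \<Rightarrow> real \<Rightarrow> nat \<Rightarrow> nat set \<Rightarrow> nat set \<Rightarrow>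
    outcome \<Rightarrow> outcome \<Rightarrow> bool" where
  "weak_pref w_f w_e i F E p p' \<longleftrightarrow> \<not> strict_pref w_f w_e i F E p' p"

definition valid :: "nat \<Rightarrow> (profile \<Rightarrow> outcome) \<Rightarrow> bool" where
  "valid n g \<longleftrightarrow> (\<forall>m\<in>profiles n.
       (\<forall>i\<in>agents n. 0 \<le> g m i \<and> g m i \<le> 1) \<and> (\<Sum>i\<in>agents n. g m i) \<le> 1)"

definition DSIC :: "nat \<Rightarrow> real \<Rightarrow> real \<Rightarrow> (profile \<Rightarrow> outcome) \<Rightarrow> bool" where
  "DSIC n w_f w_e g \<longleftrightarrow> (\<forall>i\<in>agents n. \<forall>m\<in>profiles n. \<forall>m'\<in>Theta n i.
       weak_pref w_f w_e i (rF (m i)) (rE (m i)) (g m) (g (m(i := m'))))"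

definition restrictN :: "nat set \<Rightarrow> nat set \<Rightarrow> nat set" where
  "restrictN S N = (if S \<inter> N \<noteq> {} then S \<inter> N else S)"

definition choice_set :: "nat \<Rightarrow> profile \<Rightarrow> nat \<Rightarrow> nat set" where
  "choice_set n m j =
     (let N = rN (m j); F = rF (m j); E = rE (m j); I = rI n j (m j) in
      if F \<noteq> {} then restrictN F N
      else if I \<noteq> {} then restrictN I N
      else restrictN E N)"

definition gR_cond :: "nat \<Rightarrow> profile \<Rightarrow> nat \<Rightarrow> nat \<Rightarrow> real" where
  "gR_cond n m i j = (if i \<in> choice_set n m j then 1 / real (card (choice_set n m j)) else 0)"

definition gR :: "nat \<Rightarrow> profile \<Rightarrow> outcome" where
  "gR n m i = (1 / real n) * (\<Sum>j\<in>agents n - {i}. gR_cond n m i j)"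

definition lev :: "nat \<Rightarrow> report \<Rightarrow> nat \<Rightarrow> nat \<Rightarrow> nat" where
  "lev n ml l j =
     (if j \<in> rF ml \<inter> rN ml then 1
      else if j \<in> rF ml - rN ml then 2
      else if j \<in> rI n l ml \<inter> rN ml then 3
      else if j \<in> rI n l ml - rN ml then 4
      else if j \<in> rE ml \<inter> rN ml then 5
      else 6)"

definition votes :: "nat \<Rightarrow> profile \<Rightarrow> nat \<Rightarrow> nat \<Rightarrow> nat" where
  "votes n m j k = card {l \<in> agents n - {j, k}. lev n (m l) l j < lev n (m l) l k}"

definition gD_pair :: "nat \<Rightarrow> profile \<Rightarrow> nat \<Rightarrow> nat \<Rightarrow> real" where
  "gD_pair n m j k =
     (if votes n m j k > votes n m k j then 1
      else if votes n m j k = votes n m k j then 1/2 else 0)"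

definition gD :: "nat \<Rightarrow> profile \<Rightarrow> outcome" where
  "gD n m i = (2 / (real n * (real n - 1))) * (\<Sum>j\<in>agents n - {i}. gD_pair n m i j)"

end

theory Submission
  imports Defs
begin

lemma Theta_props:
  assumes "r \<in> Theta n i"
  shows "rF r \<subseteq> agents n - {i}" "rE r \<subseteq> agents n - {i}" "rF r \<inter> rE r = {}"
  using assms by (cases r; auto simp: Theta_def rF_def rE_def)+

lemma rI_sub: "rI n i r \<subseteq> agents n - {i}"
  by (auto simp: rI_def)

lemma finite_agents[simp]: "finite (agents n)" by (simp add: agents_def)
lemma card_agents[simp]: "card (agents n) = n" by (simp add: agents_def)

lemma agents_minus_ne:
  assumes "n \<ge> 2" shows "agents n - {i} \<noteq> {}"
proof -
  have "1 \<in> agents n" "2 \<in> agents n" using assms by (auto simp: agents_def)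
  then show ?thesis by (cases "i = 1") auto
qed

lemma restrictN_sub: "restrictN S N \<subseteq> S" by (auto simp: restrictN_def)
lemma restrictN_ne: "S \<noteq> {} \<Longrightarrow> restrictN S N \<noteq> {}" by (auto simp: restrictN_def)

lemma choice_sub:
  assumes "m j \<in> Theta n j"
  shows "choice_set n m j \<subseteq> agents n - {j}"
  using Theta_props[OF assms] rI_sub[of n j "m j"]
    restrictN_sub[of "rF (m j)" "rN (m j)"] restrictN_sub[of "rI n j (m j)" "rN (m j)"]
    restrictN_sub[of "rE (m j)" "rN (m j)"]
  unfolding choice_set_def Let_def by (simp split: if_split) (meson subset_trans)

lemma choice_finite:
  assumes "m j \<in> Theta n j"
  shows "finite (choice_set n m j)"
  using choice_sub[where m=m and j=j and n=n, OF assms] by (rule finite_subset) simp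

lemma choice_ne:
  assumes "m j \<in> Theta n j" "n \<ge> 2"
  shows "choice_set n m j \<noteq> {}"
proof -
  have "rF (m j) \<union> rI n j (m j) \<union> rE (m j) = agents n - {j}"
    using Theta_props[OF assms(1)] by (auto simp: rI_def)
  then have "rF (m j) \<noteq> {} \<or> rI n j (m j) \<noteq> {} \<or> rE (m j) \<noteq> {}"
    using agents_minus_ne[OF assms(2)] by auto
  then show ?thesis unfolding choice_set_def Let_def by (auto simp: restrictN_ne)
qed

lemma choice_F: "rF (m j) \<noteq> {} \<Longrightarrow> choice_set n m j \<subseteq> rF (m j)"
  unfolding choice_set_def Let_def using restrictN_sub by auto

lemma choice_I: "rF (m j) = {} \<Longrightarrow> rI n j (m j) \<noteq> {} \<Longrightarrow> choice_set n m j \<subseteq> rI n j (m j)"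
  unfolding choice_set_def Let_def using restrictN_sub by auto

lemma choice_E:
  assumes "m j \<in> Theta n j" "rF (m j) = {}" "rI n j (m j) = {}"
  shows "rE (m j) = agents n - {j}"
  using Theta_props[OF assms(1)] assms(2,3) by (auto simp: rI_def)

lemma sum_cond:
  assumes "finite A" "finite C"
  shows "(\<Sum>k\<in>A. if k \<in> C then 1 / real (card C) else 0) = real (card (A \<inter> C)) / real (card C)"
  using assms by (simp add: sum.If_cases Int_def)

lemma gR_cond_sum:
  assumes "finite A" "m j \<in> Theta n j"
  shows "(\<Sum>k\<in>A. gR_cond n m k j) = real (card (A \<inter> choice_set n m j)) / real (card (choice_set n m j))"
  unfolding gR_cond_def using sum_cond[OF assms(1) choice_finite[where m=m and j=j and n=n, OF assms(2)]] by simp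

lemma gR_cond_sum_le1:
  assumes "finite A" "m j \<in> Theta n j"
  shows "(\<Sum>k\<in>A. gR_cond n m k j) \<le> 1"
proof -
  have "card (A \<inter> choice_set n m j) \<le> card (choice_set n m j)"
    by (rule card_mono[OF choice_finite[where m=m and j=j and n=n, OF assms(2)]]) auto
  then show ?thesis unfolding gR_cond_sum[where m=m and j=j and n=n, OF assms]
    by (cases "card (choice_set n m j) = 0") (auto simp: divide_le_eq_1)
qed

lemma gR_cond_sum_ge0: "(\<Sum>k\<in>A. gR_cond n m k j) \<ge> 0"
  by (rule sum_nonneg) (simp add: gR_cond_def)

lemma gR_cond_sum_1:
  assumes "finite A" "m j \<in> Theta n j" "n \<ge> 2" "choice_set n m j \<subseteq> A"
  shows "(\<Sum>k\<in>A. gR_cond n m k j) = 1"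
proof -
  have "A \<inter> choice_set n m j = choice_set n m j" using assms(4) by auto
  moreover have "card (choice_set n m j) \<noteq> 0"
    using choice_ne[where m=m and j=j and n=n, OF assms(2,3)] choice_finite[where m=m and j=j and n=n, OF assms(2)] by auto
  ultimately show ?thesis unfolding gR_cond_sum[where m=m and j=j and n=n, OF assms(1,2)] by simp
qed

lemma gR_cond_sum_0:
  assumes "finite A" "m j \<in> Theta n j" "choice_set n m j \<inter> A = {}"
  shows "(\<Sum>k\<in>A. gR_cond n m k j) = 0"
proof -
  have "A \<inter> choice_set n m j = {}" using assms(3) by auto
  then show ?thesis unfolding gR_cond_sum[where m=m and j=j and n=n, OF assms(1,2)] by simp
qed

lemma weak_pref_suff:
  assumes "p' i = p i" "(\<Sum>j\<in>F. p' j - p j) \<le> 0" "(\<Sum>j\<in>E. p' j - p j) \<ge> 0"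
    "w_f > 0" "w_e > 0"
  shows "weak_pref w_f w_e i F E p p'"
proof -
  have "w_f * (\<Sum>j\<in>F. p' j - p j) \<le> 0" using assms by (simp add: mult_nonneg_nonpos)
  moreover have "w_e * (\<Sum>j\<in>E. p' j - p j) \<ge> 0" using assms by simp
  ultimately show ?thesis using assms(1) unfolding weak_pref_def strict_pref_def by auto
qed


lemma choice_upd: "j \<noteq> i \<Longrightarrow> choice_set n (m(i := r)) j = choice_set n m j"
  unfolding choice_set_def by simp

lemma gR_cond_upd: "j \<noteq> i \<Longrightarrow> gR_cond n (m(i := r)) k j = gR_cond n m k j"
  unfolding gR_cond_def using choice_upd by simp

lemma gR_self: "gR n (m(i := r)) i = gR n m i"
  unfolding gR_def by (rule arg_cong[where f="\<lambda>x. 1 / real n * x"], rule sum.cong) (auto simp: gR_cond_upd)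

lemma gR_diff:
  assumes "k \<in> agents n" "k \<noteq> i" "i \<in> agents n"
  shows "gR n (m(i := r)) k - gR n m k = (1 / real n) * (gR_cond n (m(i := r)) k i - gR_cond n m k i)"
proof -
  have iin: "i \<in> agents n - {k}" using assms by auto
  have "(\<Sum>j\<in>agents n - {k} - {i}. gR_cond n (m(i := r)) k j) = (\<Sum>j\<in>agents n - {k} - {i}. gR_cond n m k j)"
    by (rule sum.cong) (auto simp: gR_cond_upd)
  then show ?thesis unfolding gR_def
    using sum.remove[OF _ iin, of "gR_cond n (m(i := r)) k"] sum.remove[OF _ iin, of "gR_cond n m k"]
    by (simp add: algebra_simps)
qed

lemma gR_sum_diff:
  assumes "A \<subseteq> agents n - {i}" "i \<in> agents n"
  shows "(\<Sum>k\<in>A. gR n (m(i := r)) k - gR n m k)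
     = (1 / real n) * ((\<Sum>k\<in>A. gR_cond n (m(i := r)) k i) - (\<Sum>k\<in>A. gR_cond n m k i))"
proof -
  have "(\<Sum>k\<in>A. gR n (m(i := r)) k - gR n m k) = (\<Sum>k\<in>A. (1 / real n) * (gR_cond n (m(i := r)) k i - gR_cond n m k i))"
  proof (rule sum.cong)
    fix k assume "k \<in> A"
    then show "gR n (m(i := r)) k - gR n m k = (1 / real n) * (gR_cond n (m(i := r)) k i - gR_cond n m k i)"
      using assms by (intro gR_diff) auto
  qed simp
  then show ?thesis by (simp add: sum_distrib_left sum_subtractf algebra_simps)
qed

lemma gR_DSIC:
  assumes "n \<ge> 2" "w_f > 0" "w_e > 0"
  shows "DSIC n w_f w_e (gR n)"
  unfolding DSIC_def
proof (intro ballI)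
  fix i m r assume i: "i \<in> agents n" and m: "m \<in> profiles n" and r: "r \<in> Theta n i"
  define M where "M = m(i := r)"
  have mi: "m i \<in> Theta n i" using m i by (auto simp: profiles_def)
  have Mi: "M i \<in> Theta n i" using r by (simp add: M_def)
  note TP = Theta_props[OF mi]
  let ?F = "rF (m i)" and ?E = "rE (m i)"
  have finF: "finite ?F" and finE: "finite ?E" using TP by (auto intro: finite_subset)
  have sF: "(\<Sum>k\<in>?F. gR n M k - gR n m k) = (1 / real n) * ((\<Sum>k\<in>?F. gR_cond n M k i) - (\<Sum>k\<in>?F. gR_cond n m k i))"
    unfolding M_def by (rule gR_sum_diff[OF TP(1) i])
  have sE: "(\<Sum>k\<in>?E. gR n M k - gR n m k) = (1 / real n) * ((\<Sum>k\<in>?E. gR_cond n M k i) - (\<Sum>k\<in>?E. gR_cond n m k i))"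
    unfolding M_def by (rule gR_sum_diff[OF TP(2) i])
  have key: "(\<Sum>k\<in>?F. gR_cond n M k i) \<le> (\<Sum>k\<in>?F. gR_cond n m k i) \<and>
             (\<Sum>k\<in>?E. gR_cond n M k i) \<ge> (\<Sum>k\<in>?E. gR_cond n m k i)"
  proof (cases "?F = {}")
    case False
    have c: "choice_set n m i \<subseteq> ?F" using choice_F[where m=m and j=i and n=n, OF False] .
    have "(\<Sum>k\<in>?F. gR_cond n m k i) = 1" by (rule gR_cond_sum_1[where m=m and j=i and n=n, OF finF mi assms(1) c])
    moreover have "(\<Sum>k\<in>?E. gR_cond n m k i) = 0"
      by (rule gR_cond_sum_0[where m=m and j=i and n=n, OF finE mi]) (use c TP(3) in auto)
    moreover have "(\<Sum>k\<in>?F. gR_cond n M k i) \<le> 1" by (rule gR_cond_sum_le1[where m=M and j=i and n=n, OF finF Mi])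
    moreover have "(\<Sum>k\<in>?E. gR_cond n M k i) \<ge> 0" by (rule gR_cond_sum_ge0)
    ultimately show ?thesis by simp
  next
    case True
    show ?thesis
    proof (cases "rI n i (m i) = {}")
      case False
      have c: "choice_set n m i \<subseteq> rI n i (m i)" using choice_I[where m=m and j=i and n=n, OF True False] .
      have "(\<Sum>k\<in>?E. gR_cond n m k i) = 0"
        by (rule gR_cond_sum_0[where m=m and j=i and n=n, OF finE mi]) (use c in \<open>auto simp: rI_def\<close>)
      moreover have "(\<Sum>k\<in>?E. gR_cond n M k i) \<ge> 0" by (rule gR_cond_sum_ge0)
      ultimately show ?thesis using True by simp
    next
      case False2: True
      have E: "?E = agents n - {i}" by (rule choice_E[where m=m and j=i and n=n, OF mi True False2])
      have "(\<Sum>k\<in>?E. gR_cond n m k i) = 1"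
        by (rule gR_cond_sum_1[where m=m and j=i and n=n, OF finE mi assms(1)]) (use choice_sub[where m=m and j=i and n=n, OF mi] E in auto)
      moreover have "(\<Sum>k\<in>?E. gR_cond n M k i) = 1"
        by (rule gR_cond_sum_1[where m=M and j=i and n=n, OF finE Mi assms(1)]) (use choice_sub[where m=M and j=i and n=n, OF Mi] E in auto)
      ultimately show ?thesis using True by simp
    qed
  qed
  have "weak_pref w_f w_e i ?F ?E (gR n m) (gR n M)"
  proof (rule weak_pref_suff[OF _ _ _ assms(2,3)])
    show "gR n M i = gR n m i" unfolding M_def by (rule gR_self)
    show "(\<Sum>j\<in>?F. gR n M j - gR n m j) \<le> 0" using sF key
      by (simp add: divide_nonpos_nonneg)
    show "(\<Sum>j\<in>?E. gR n M j - gR n m j) \<ge> 0" using sE key by simp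
  qed
  then show "weak_pref w_f w_e i ?F ?E (gR n m) (gR n (m(i := r)))" by (simp add: M_def)
qed


lemma gR_cond_bounds: "0 \<le> gR_cond n m k j" "gR_cond n m k j \<le> 1"
  unfolding gR_cond_def by (auto simp: divide_le_eq_1)

lemma swap_ne:
  fixes f :: "nat \<Rightarrow> nat \<Rightarrow> real"
  assumes "finite V"
  shows "(\<Sum>i\<in>V. \<Sum>j\<in>V - {i}. f i j) = (\<Sum>j\<in>V. \<Sum>i\<in>V - {j}. f i j)"
proof -
  have e1: "\<And>i. {j. j \<in> V \<and> i \<noteq> j} = V - {i}" by auto
  have e2: "\<And>j. {i. i \<in> V \<and> i \<noteq> j} = V - {j}" by auto
  have "(\<Sum>i\<in>V. \<Sum>j\<in>{j. j \<in> V \<and> i \<noteq> j}. f i j) = (\<Sum>j\<in>V. \<Sum>i\<in>{i. i \<in> V \<and> i \<noteq> j}. f i j)"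
    by (rule sum.swap_restrict[OF assms assms])
  then show ?thesis by (simp only: e1 e2)
qed

lemma gR_valid:
  assumes "n \<ge> 2"
  shows "valid n (gR n)"
  unfolding valid_def
proof (intro ballI conjI)
  fix m assume m: "m \<in> profiles n"
  have npos: "real n > 0" using assms by simp
  {
    fix i assume i: "i \<in> agents n"
    show "0 \<le> gR n m i" unfolding gR_def by (intro mult_nonneg_nonneg sum_nonneg) (auto simp: gR_cond_bounds)
    have "(\<Sum>j\<in>agents n - {i}. gR_cond n m i j) \<le> (\<Sum>j\<in>agents n - {i}. 1)"
      by (rule sum_mono) (simp add: gR_cond_bounds)
    also have "\<dots> = real n - 1" using i assms by (simp add: of_nat_diff)
    finally have "(\<Sum>j\<in>agents n - {i}. gR_cond n m i j) \<le> real n - 1" .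
    then show "gR n m i \<le> 1" unfolding gR_def using npos by (simp add: field_simps)
  }
  have "(\<Sum>i\<in>agents n. \<Sum>j\<in>agents n - {i}. gR_cond n m i j) = (\<Sum>j\<in>agents n. \<Sum>i\<in>agents n - {j}. gR_cond n m i j)"
    by (rule swap_ne) simp
  also have "\<dots> \<le> (\<Sum>j\<in>agents n. 1)"
  proof (rule sum_mono)
    fix j assume "j \<in> agents n"
    then have "m j \<in> Theta n j" using m by (auto simp: profiles_def)
    then show "(\<Sum>i\<in>agents n - {j}. gR_cond n m i j) \<le> 1"
      by (intro gR_cond_sum_le1[where m=m and j=j and n=n]) auto
  qed
  finally have "(\<Sum>i\<in>agents n. \<Sum>j\<in>agents n - {i}. gR_cond n m i j) \<le> real n" by simp
  then show "(\<Sum>i\<in>agents n. gR n m i) \<le> 1" unfolding gR_def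
    using npos by (simp add: sum_divide_distrib[symmetric] divide_le_eq)
qed

lemma votes_same: "i \<in> {k, j} \<Longrightarrow> votes n (m(i := r)) k j = votes n m k j"
  unfolding votes_def by (rule arg_cong[where f=card]) auto

lemma pair_same: "i \<in> {k, j} \<Longrightarrow> gD_pair n (m(i := r)) k j = gD_pair n m k j"
  unfolding gD_pair_def using votes_same[of i k j n m r] votes_same[of i j k n m r] by auto

lemma pair_anti: "gD_pair n m k j + gD_pair n m j k = 1"
  unfolding gD_pair_def by auto

lemma pair_bounds: "0 \<le> gD_pair n m k j" "gD_pair n m k j \<le> 1"
  unfolding gD_pair_def by auto

lemma votes_mono:
  assumes "lev n (m i) i k < lev n (m i) i j"
  shows "votes n (m(i := r)) k j \<le> votes n m k j" "votes n m j k \<le> votes n (m(i := r)) j k"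
proof -
  have fin: "\<And>P A. finite {l \<in> agents n - A. P l}" by simp
  have "{l \<in> agents n - {k, j}. lev n ((m(i := r)) l) l k < lev n ((m(i := r)) l) l j}
     \<subseteq> {l \<in> agents n - {k, j}. lev n (m l) l k < lev n (m l) l j}"
    using assms by (auto split: if_splits)
  then show "votes n (m(i := r)) k j \<le> votes n m k j"
    unfolding votes_def by (rule card_mono[OF fin])
  have "{l \<in> agents n - {j, k}. lev n (m l) l j < lev n (m l) l k}
     \<subseteq> {l \<in> agents n - {j, k}. lev n ((m(i := r)) l) l j < lev n ((m(i := r)) l) l k}"
    using assms by (auto split: if_splits)
  then show "votes n m j k \<le> votes n (m(i := r)) j k"
    unfolding votes_def by (rule card_mono[OF fin])
qed

lemma pair_fun_mono:
  fixes a b a' b' :: nat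
  assumes "a' \<le> a" "b \<le> b'"
  shows "(if a' > b' then 1 else if a' = b' then 1/2 else 0) \<le> (if a > b then 1 else if a = b then 1/2 else (0::real))"
  using assms by auto

lemma pair_mono:
  assumes "lev n (m i) i k < lev n (m i) i j"
  shows "gD_pair n (m(i := r)) k j \<le> gD_pair n m k j"
  unfolding gD_pair_def by (rule pair_fun_mono[OF votes_mono[where m=m and i=i and n=n, OF assms, of r]])

lemma antisym_sum:
  fixes D :: "nat \<Rightarrow> nat \<Rightarrow> real"
  assumes "finite V" "A \<subseteq> V" "\<And>k j. D k j = - D j k"
  shows "(\<Sum>k\<in>A. \<Sum>j\<in>V - {k}. D k j) = (\<Sum>k\<in>A. \<Sum>j\<in>V - A. D k j)"
proof -
  have d0: "\<And>k. D k k = 0" using assms(3) by (metis add.inverse_inverse neg_equal_zero)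
  have finA: "finite A" using assms(1,2) by (rule rev_finite_subset)
  have s1: "\<And>k. k \<in> A \<Longrightarrow> (\<Sum>j\<in>V - {k}. D k j) = (\<Sum>j\<in>A. D k j) + (\<Sum>j\<in>V - A. D k j)"
  proof -
    fix k assume k: "k \<in> A"
    have "(\<Sum>j\<in>V. D k j) = D k k + (\<Sum>j\<in>V - {k}. D k j)"
      using k assms(1,2) by (intro sum.remove) auto
    moreover have "(\<Sum>j\<in>V. D k j) = (\<Sum>j\<in>A. D k j) + (\<Sum>j\<in>V - A. D k j)"
      using assms(1,2) by (metis add.commute sum.subset_diff)
    ultimately show "?thesis k" using d0 by simp
  qed
  have X: "(\<Sum>k\<in>A. \<Sum>j\<in>A. D k j) = 0"
  proof -
    have "(\<Sum>k\<in>A. \<Sum>j\<in>A. D k j) = (\<Sum>j\<in>A. \<Sum>k\<in>A. D k j)" by (rule sum.swap)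
    also have "\<dots> = (\<Sum>j\<in>A. \<Sum>k\<in>A. - D j k)"
      by (intro sum.cong refl assms(3))
    also have "\<dots> = - (\<Sum>k\<in>A. \<Sum>j\<in>A. D k j)" by (simp add: sum_negf)
    finally show ?thesis by simp
  qed
  have "(\<Sum>k\<in>A. \<Sum>j\<in>V - {k}. D k j) = (\<Sum>k\<in>A. (\<Sum>j\<in>A. D k j) + (\<Sum>j\<in>V - A. D k j))"
    by (rule sum.cong) (auto simp: s1)
  also have "\<dots> = (\<Sum>k\<in>A. \<Sum>j\<in>V - A. D k j)" using X by (simp add: sum.distrib)
  finally show ?thesis .
qed


lemma lev_F: "k \<in> rF r \<Longrightarrow> lev n r l k \<le> 2"
  unfolding lev_def by auto

lemma lev_notF: "j \<notin> rF r \<Longrightarrow> lev n r l j \<ge> 3"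
  unfolding lev_def by auto

lemma lev_E: "r \<in> Theta n l \<Longrightarrow> k \<in> rE r \<Longrightarrow> lev n r l k \<ge> 5"
  using Theta_props(3)[of r n l] unfolding lev_def rI_def by auto

lemma lev_notE: "j \<in> agents n - {l} \<Longrightarrow> j \<notin> rE r \<Longrightarrow> lev n r l j \<le> 4"
  unfolding lev_def rI_def by auto

definition cD :: "nat \<Rightarrow> real" where "cD n = 2 / (real n * (real n - 1))"

lemma cD_pos: "n \<ge> 2 \<Longrightarrow> cD n > 0"
  unfolding cD_def by (simp add: field_simps)

lemma gD_alt: "gD n m i = cD n * (\<Sum>j\<in>agents n - {i}. gD_pair n m i j)"
  unfolding gD_def cD_def by simp

lemma gD_self: "gD n (m(i := r)) i = gD n m i"
  unfolding gD_alt by (rule arg_cong[where f="\<lambda>x. cD n * x"], rule sum.cong) (auto simp: pair_same)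

lemma gD_sum_diff:
  assumes "A \<subseteq> agents n"
  shows "(\<Sum>k\<in>A. gD n (m(i := r)) k - gD n m k)
     = cD n * (\<Sum>k\<in>A. \<Sum>j\<in>agents n - A. gD_pair n (m(i := r)) k j - gD_pair n m k j)"
proof -
  have "(\<Sum>k\<in>A. gD n (m(i := r)) k - gD n m k)
     = cD n * (\<Sum>k\<in>A. \<Sum>j\<in>agents n - {k}. gD_pair n (m(i := r)) k j - gD_pair n m k j)"
    unfolding gD_alt by (simp add: sum_subtractf sum_distrib_left right_diff_distrib)
  also have "(\<Sum>k\<in>A. \<Sum>j\<in>agents n - {k}. gD_pair n (m(i := r)) k j - gD_pair n m k j)
     = (\<Sum>k\<in>A. \<Sum>j\<in>agents n - A. gD_pair n (m(i := r)) k j - gD_pair n m k j)"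
  proof (rule antisym_sum[OF finite_agents assms])
    fix k j
    show "gD_pair n (m(i := r)) k j - gD_pair n m k j = - (gD_pair n (m(i := r)) j k - gD_pair n m j k)"
      using pair_anti[of n "m(i := r)" k j] pair_anti[of n m k j] by simp
  qed
  finally show ?thesis .
qed

lemma gD_DSIC:
  assumes "n \<ge> 2" "w_f > 0" "w_e > 0"
  shows "DSIC n w_f w_e (gD n)"
  unfolding DSIC_def
proof (intro ballI)
  fix i m r assume i: "i \<in> agents n" and m: "m \<in> profiles n" and r: "r \<in> Theta n i"
  have mi: "m i \<in> Theta n i" using m i by (auto simp: profiles_def)
  note TP = Theta_props[OF mi]
  let ?F = "rF (m i)" and ?E = "rE (m i)"
  have c: "cD n > 0" using cD_pos[OF assms(1)] .
  have SF: "(\<Sum>k\<in>?F. \<Sum>j\<in>agents n - ?F. gD_pair n (m(i := r)) k j - gD_pair n m k j) \<le> 0"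
  proof (intro sum_nonpos)
    fix k j assume k: "k \<in> ?F" and j: "j \<in> agents n - ?F"
    show "gD_pair n (m(i := r)) k j - gD_pair n m k j \<le> 0"
    proof (cases "j = i")
      case True then show ?thesis by (simp add: pair_same)
    next
      case False
      have "lev n (m i) i k < lev n (m i) i j"
        using lev_F[OF k, of n i] lev_notF[of j "m i" n i] j by auto
      then show ?thesis using pair_mono[where m=m and i=i and n=n] by fastforce
    qed
  qed
  have SE: "(\<Sum>k\<in>?E. \<Sum>j\<in>agents n - ?E. gD_pair n (m(i := r)) k j - gD_pair n m k j) \<ge> 0"
  proof (intro sum_nonneg)
    fix k j assume k: "k \<in> ?E" and j: "j \<in> agents n - ?E"
    show "gD_pair n (m(i := r)) k j - gD_pair n m k j \<ge> 0"
    proof (cases "j = i")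
      case True then show ?thesis by (simp add: pair_same)
    next
      case False
      have "lev n (m i) i j < lev n (m i) i k"
        using lev_E[OF mi k] lev_notE[of j n i "m i"] j False by auto
      then have "gD_pair n (m(i := r)) j k \<le> gD_pair n m j k"
        using pair_mono[where m=m and i=i and n=n] by fastforce
      then show ?thesis
        using pair_anti[of n "m(i := r)" k j] pair_anti[of n m k j] by simp
    qed
  qed
  show "weak_pref w_f w_e i ?F ?E (gD n m) (gD n (m(i := r)))"
  proof (rule weak_pref_suff[OF _ _ _ assms(2,3)])
    show "gD n (m(i := r)) i = gD n m i" by (rule gD_self)
    show "(\<Sum>j\<in>?F. gD n (m(i := r)) j - gD n m j) \<le> 0"
      unfolding gD_sum_diff[OF subset_trans[OF TP(1) Diff_subset]]
      using c SF by (simp add: mult_pos_neg mult_nonneg_nonpos)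
    show "(\<Sum>j\<in>?E. gD n (m(i := r)) j - gD n m j) \<ge> 0"
      unfolding gD_sum_diff[OF subset_trans[OF TP(2) Diff_subset]]
      using c SE by simp
  qed
qed

lemma gD_valid:
  assumes "n \<ge> 2"
  shows "valid n (gD n)"
  unfolding valid_def
proof (intro ballI conjI)
  fix m assume m: "m \<in> profiles n"
  have c: "cD n > 0" using cD_pos[OF assms] .
  have rn: "real n \<ge> 2" using assms by simp
  {
    fix i assume i: "i \<in> agents n"
    show "0 \<le> gD n m i" unfolding gD_alt using c
      by (intro mult_nonneg_nonneg sum_nonneg) (auto simp: pair_bounds)
    have "(\<Sum>j\<in>agents n - {i}. gD_pair n m i j) \<le> (\<Sum>j\<in>agents n - {i}. 1)"
      by (rule sum_mono) (simp add: pair_bounds)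
    also have "\<dots> = real n - 1" using i assms by (simp add: of_nat_diff)
    finally have "(\<Sum>j\<in>agents n - {i}. gD_pair n m i j) \<le> real n - 1" .
    then have "gD n m i \<le> cD n * (real n - 1)" unfolding gD_alt using c by simp
    also have "\<dots> = 2 / real n" unfolding cD_def using rn by (simp add: field_simps)
    also have "\<dots> \<le> 1" using rn by simp
    finally show "gD n m i \<le> 1" .
  }
  define P where "P i j = gD_pair n m i j - 1/2" for i j
  have Pa: "P i j = - P j i" for i j unfolding P_def using pair_anti[of n m i j] by linarith
  have "(\<Sum>i\<in>agents n. \<Sum>j\<in>agents n - {i}. P i j) = (\<Sum>i\<in>agents n. \<Sum>j\<in>agents n - agents n. P i j)"
    by (rule antisym_sum[OF finite_agents subset_refl Pa])
  then have P0: "(\<Sum>i\<in>agents n. \<Sum>j\<in>agents n - {i}. P i j) = 0" by simp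
  have "\<And>i. i \<in> agents n \<Longrightarrow> (\<Sum>j\<in>agents n - {i}. gD_pair n m i j) = (\<Sum>j\<in>agents n - {i}. P i j) + (real n - 1) / 2"
    using assms by (simp add: P_def sum_subtractf of_nat_diff)
  then have "(\<Sum>i\<in>agents n. gD n m i) = cD n * (\<Sum>i\<in>agents n. (\<Sum>j\<in>agents n - {i}. P i j) + (real n - 1) / 2)"
    unfolding gD_alt by (simp add: sum_distrib_left)
  also have "\<dots> = cD n * (real n * (real n - 1) / 2)" using P0 by (simp add: sum.distrib)
  also have "\<dots> = 1" unfolding cD_def using rn by (simp add: field_simps)
  finally show "(\<Sum>i\<in>agents n. gD n m i) \<le> 1" by simp
qed

theorem proposition1:
  fixes n :: nat and w_f w_e :: real
  assumes "n \<ge> 2" and "w_f > 0" and "w_e > 0"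
  shows "valid n (gR n) \<and> DSIC n w_f w_e (gR n) \<and> valid n (gD n) \<and> DSIC n w_f w_e (gD n)"
  using gR_valid[OF assms(1)] gR_DSIC[OF assms] gD_valid[OF assms(1)] gD_DSIC[OF assms] by simp

end
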